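(* Let $p_n\in(0,1)$ with $p_n\to1$, let $\tilde K=\tilde K_n=\frac{2\ln n}{1-p_n}$, and let $r_n>0$ satisfy $r_n=o(\tilde K^2)$. Then there are positive sequences $\delta_n\to0$ and $\varepsilon_n\to0$ with $\delta_n\tilde K\to\infty$ such that for any sequence of non-random graphs $R_n$ with $V(R_n)=[n]$ and $e(R_n)\le r_n$, the number $X_n$ of cliques of size $\lfloor\tilde K(1+\delta_n)\rfloor$ in $G(n,p_n)\vee R_n$ satisfies $\mathbb E\,X_n\le\varepsilon_n$.
   Context: $G(n,p)$ is the Erdős–Rényi random graph on $[n]$ with each edge present independently with probability $p$. For graphs $G,R$ on the same vertex set, $G\vee R$ is the graph on that vertex set with edge set $E(G)\cup E(R)$. $e(R)$ is the number of edges of $R$. *)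

theory Defs
  imports "HOL-Probability.Probability" "HOL-Library.Landau_Symbols"
begin

text \<open>Simple graphs on the vertex set [n] = {1..n} are represented by their edge sets,
  i.e. sets of 2-element subsets of {1..n}.\<close>

definition all_edges :: "nat \<Rightarrow> nat set set" where
  "all_edges n = {e. e \<subseteq> {1..n} \<and> card e = 2}"

definition gnp :: "nat \<Rightarrow> real \<Rightarrow> nat set set pmf" where
  "gnp n p = map_pmf (\<lambda>f. {e \<in> all_edges n. f e})
                (Pi_pmf (all_edges n) False (\<lambda>_. bernoulli_pmf p))"

definition graph_join :: "nat set set \<Rightarrow> nat set set \<Rightarrow> nat set set" where
  "graph_join G R = G \<union> R"

definition is_clique :: "nat set set \<Rightarrow> nat set \<Rightarrow> bool" where
  "is_clique E S \<longleftrightarrow> (\<forall>u\<in>S. \<forall>v\<in>S. u \<noteq> v \<longrightarrow> {u, v} \<in> E)"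

definition num_cliques :: "nat \<Rightarrow> nat set set \<Rightarrow> nat \<Rightarrow> nat" where
  "num_cliques n E k = card {S. S \<subseteq> {1..n} \<and> card S = k \<and> is_clique E S}"

end

theory Submission
  imports Defs "HOL-Real_Asymp.Real_Asymp"
begin


lemma prob_subset_gnp:
  assumes F: "F \<subseteq> all_edges n" and p: "0 \<le> p" "p \<le> 1"
  shows "measure_pmf.prob (gnp n p) {G. F \<subseteq> G} = p ^ card F"
proof -
  have fin: "finite (all_edges n)"
    unfolding all_edges_def by (rule finite_subset[of _ "Pow {1..n}"]) auto
  define B where "B = (\<lambda>e. if e \<in> F then {True} else (UNIV :: bool set))"
  have pre: "(\<lambda>f. {e \<in> all_edges n. f e}) -` {G. F \<subseteq> G} = Pi (all_edges n) B"
    using F by (auto simp: B_def Pi_def)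
  have "measure_pmf.prob (gnp n p) {G. F \<subseteq> G}
      = measure_pmf.prob (Pi_pmf (all_edges n) False (\<lambda>_. bernoulli_pmf p)) (Pi (all_edges n) B)"
    unfolding gnp_def measure_map_pmf pre ..
  also have "\<dots> = (\<Prod>e\<in>all_edges n. measure_pmf.prob (bernoulli_pmf p) (B e))"
    by (rule measure_Pi_pmf_Pi[OF fin])
  also have "\<dots> = (\<Prod>e\<in>all_edges n. if e \<in> F then p else 1)"
    by (intro prod.cong refl) (auto simp: B_def measure_pmf_single p)
  also have "\<dots> = p ^ card F"
    using F fin by (simp add: prod.If_cases Int_absorb1)
  finally show ?thesis .
qed

lemma clique_sub:
  assumes "is_clique H S"
  shows "{e. e \<subseteq> S \<and> card e = 2} \<subseteq> H"
proof
  fix e assume "e \<in> {e. e \<subseteq> S \<and> card e = 2}"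
  then obtain u v where "e = {u,v}" "u \<noteq> v" "e \<subseteq> S" by (auto simp: card_2_iff)
  then show "e \<in> H" using assms unfolding is_clique_def by auto
qed

lemma fin_all_edges: "finite (all_edges n)"
  unfolding all_edges_def by (rule finite_subset[of _ "Pow {1..n}"]) auto

lemma expect_bound:
  assumes p: "0 < p" "p \<le> 1" and R: "R \<subseteq> all_edges n"
  shows "measure_pmf.expectation (gnp n p) (\<lambda>G. real (num_cliques n (graph_join G R) k))
     \<le> real (n choose k) * p ^ (k choose 2) / p ^ card R"
proof -
  define SS where "SS = {S. S \<subseteq> {1..n} \<and> card S = k}"
  have finSS: "finite SS" unfolding SS_def by (rule finite_subset[of _ "Pow {1..n}"]) auto
  have cardSS: "card SS = n choose k" unfolding SS_def using n_subsets[of "{1..n}" k] by simp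
  have eq: "real (num_cliques n (graph_join G R) k) = (\<Sum>S\<in>SS. indicator {G. is_clique (graph_join G R) S} G)" for G
  proof -
    have "num_cliques n (graph_join G R) k = card {S\<in>SS. is_clique (graph_join G R) S}"
      unfolding num_cliques_def SS_def by (rule arg_cong[where f=card]) auto
    also have "\<dots> = (\<Sum>S\<in>SS. if is_clique (graph_join G R) S then 1 else 0)"
      using finSS by (simp add: sum.If_cases Int_def)
    finally show ?thesis by (auto simp: indicator_def intro!: sum.cong)
  qed
  have "measure_pmf.expectation (gnp n p) (\<lambda>G. real (num_cliques n (graph_join G R) k))
      = (\<Sum>S\<in>SS. measure_pmf.expectation (gnp n p) (indicator {G. is_clique (graph_join G R) S}))"
    unfolding eq by (rule Bochner_Integration.integral_sum) (auto intro!: integrable_real_indicator simp: measure_pmf.emeasure_finite top.not_eq_extremum[symmetric])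
  also have "\<dots> = (\<Sum>S\<in>SS. measure_pmf.prob (gnp n p) {G. is_clique (graph_join G R) S})"
    by simp
  also have "\<dots> \<le> (\<Sum>S\<in>SS. p ^ (k choose 2) / p ^ card R)"
  proof (rule sum_mono)
    fix S assume S: "S \<in> SS"
    define ES where "ES = {e. e \<subseteq> S \<and> card e = 2}"
    have finS: "finite S" using S unfolding SS_def by (auto intro: finite_subset)
    have cES: "card ES = k choose 2" using n_subsets[OF finS, of 2] S unfolding ES_def SS_def by simp
    have finES: "finite ES"
    proof (rule finite_subset[of _ "Pow S"])
      show "ES \<subseteq> Pow S" unfolding ES_def by auto
    qed (use finS in simp)
    have ESsub: "ES - R \<subseteq> all_edges n" using S unfolding ES_def SS_def all_edges_def by auto
    have "measure_pmf.prob (gnp n p) {G. is_clique (graph_join G R) S}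
        \<le> measure_pmf.prob (gnp n p) {G. ES - R \<subseteq> G}"
    proof (rule measure_pmf.finite_measure_mono)
      show "{G. is_clique (graph_join G R) S} \<subseteq> {G. ES - R \<subseteq> G}"
      proof safe
        fix G e assume "is_clique (graph_join G R) S" "e \<in> ES" "e \<notin> R"
        then have "e \<in> G \<union> R" using clique_sub[of "graph_join G R" S] unfolding ES_def graph_join_def by blast
        then show "e \<in> G" using \<open>e \<notin> R\<close> by blast
      qed
    qed simp
    also have "\<dots> = p ^ card (ES - R)" using prob_subset_gnp[OF ESsub] p by simp
    also have "\<dots> \<le> p ^ (k choose 2) / p ^ card R"
    proof -
      have "card ES \<le> card (ES - R) + card R"
      proof -
        have finR: "finite R" using R fin_all_edges by (rule finite_subset)
        have "card ES \<le> card ((ES - R) \<union> R)" using finES finR by (intro card_mono) auto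
        also have "\<dots> \<le> card (ES - R) + card R" by (rule card_Un_le)
        finally show ?thesis .
      qed
      hence "p ^ (card (ES - R) + card R) \<le> p ^ card ES"
        by (rule power_decreasing) (use p in auto)
      hence "p ^ card (ES - R) * p ^ card R \<le> p ^ card ES" by (simp add: power_add)
      thus ?thesis using p cES by (simp add: field_simps)
    qed
    finally show "measure_pmf.prob (gnp n p) {G. is_clique (graph_join G R) S} \<le> p ^ (k choose 2) / p ^ card R" .
  qed
  also have "\<dots> = real (n choose k) * p ^ (k choose 2) / p ^ card R"
    using cardSS by simp
  finally show ?thesis .
qed



lemma key:
  fixes n k :: nat and P Kk D S Rr L :: real
  assumes n3: "n \<ge> 3" and L: "L = ln (real n)" and P1: "1/2 \<le> P" and P2: "P < 1"
    and Kk: "Kk = 2 * L / (1 - P)" and Rr: "Rr = S * Kk^2" and S0: "S \<ge> 0"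
    and sS1: "sqrt S \<le> 1/16" and sS2: "sqrt S \<le> D" and DL: "D * L \<ge> 2" and DK: "D * Kk \<ge> 1"
    and k: "k = nat \<lfloor>Kk * (1 + D)\<rfloor>"
  shows "real (n choose k) * P ^ (k choose 2) / P powr Rr \<le> exp (- (Kk * L * D) / 4)"
proof -
  define q where "q = 1 - P"
  have q0: "0 < q" "q \<le> 1/2" using P1 P2 by (auto simp: q_def)
  have Lpos: "L > 0" using n3 L by simp
  have Kpos: "Kk > 0" using Kk Lpos q0 by (simp add: q_def)
  have qK: "q * Kk = 2 * L" using Kk q0 by (simp add: q_def)
  have D0: "D > 0" using DL Lpos by (smt (verit) mult_nonpos_nonneg)
  define x where "x = Kk * (1 + D)"
  have x0: "x \<ge> 0" using Kpos D0 by (simp add: x_def)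
  define kr where "kr = real k"
  have kr1: "kr \<le> x" using x0 by (simp add: kr_def k x_def[symmetric])
  have kr2: "kr > x - 1" using x0 by (simp add: kr_def k x_def[symmetric])
  have krK: "kr \<ge> Kk" using kr2 DK by (simp add: x_def algebra_simps)
  have kr0: "kr > 0" using krK Kpos by simp
  have Ppos: "P > 0" using P1 by simp
  have lnP1: "ln P \<le> - q" using ln_le_minus_one[OF Ppos] by (simp add: q_def)
  have lnP2: "- ln P \<le> 2 * q"
  proof -
    have "ln (1/P) \<le> 1/P - 1" using ln_le_minus_one[of "1/P"] Ppos by simp
    moreover have "1/P - 1 = q / P" using Ppos by (simp add: q_def field_simps)
    moreover have "q / P \<le> 2 * q" using P1 q0 by (simp add: field_simps) 
    ultimately show ?thesis using Ppos by (simp add: ln_div)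
  qed
  have ch: "real (k choose 2) = kr * (kr - 1) / 2"
  proof -
    have ev: "even (k * (k - 1))" by (cases "even k") (auto simp: even_mult_iff)
    have "real (k choose 2) = real (k * (k - 1)) / 2"
      unfolding choose_two using ev by (simp add: real_of_nat_div)
    also have "\<dots> = kr * (kr - 1) / 2" by (cases k) (auto simp: kr_def algebra_simps)
    finally show ?thesis .
  qed
  have c1: "real (n choose k) \<le> exp (kr * L)"
  proof -
    have "real (n choose k) \<le> real n ^ k"
    proof (cases "k \<le> n")
      case True thus ?thesis using binomial_le_pow[OF True] by (metis of_nat_le_iff of_nat_power)
    next
      case False thus ?thesis by (simp add: binomial_eq_0)
    qed
    also have "real n ^ k = exp (kr * L)" using n3 L
      by (simp add: kr_def exp_of_nat_mult)
    finally show ?thesis .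
  qed
  have c2: "P ^ (k choose 2) = exp (kr * (kr - 1) / 2 * ln P)"
    using Ppos ch by (metis exp_ln exp_of_nat_mult)
  have c3: "P powr Rr = exp (Rr * ln P)" using Ppos by (simp add: powr_def)
  have "real (n choose k) * P ^ (k choose 2) / P powr Rr
        \<le> exp (kr * L) * exp (kr * (kr - 1) / 2 * ln P) / exp (Rr * ln P)"
    unfolding c2 c3 by (intro divide_right_mono mult_right_mono c1) auto
  also have "\<dots> = exp (kr * L + kr * (kr - 1) / 2 * ln P - Rr * ln P)"
    by (simp add: exp_add exp_diff)
  also have "\<dots> \<le> exp (- (Kk * L * D) / 4)"
  proof -
    have t1: "kr * (kr - 1) / 2 * ln P \<le> - q * (kr * (kr - 1) / 2)"
    proof -
      have "kr \<ge> 1" using kr0 by (simp add: kr_def)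
      hence "kr * (kr - 1) / 2 \<ge> 0" by simp
      hence "kr * (kr - 1) / 2 * ln P \<le> kr * (kr - 1) / 2 * (- q)"
        using lnP1 by (intro mult_left_mono) auto
      thus ?thesis by (simp add: algebra_simps)
    qed
    have t2: "- (Rr * ln P) \<le> 2 * q * Rr"
    proof -
      have "Rr \<ge> 0" using Rr S0 by simp
      hence "Rr * (- ln P) \<le> Rr * (2 * q)" using lnP2 by (intro mult_left_mono) auto
      thus ?thesis by (simp add: algebra_simps)
    qed
    have t3: "L - q * (kr - 1) / 2 \<le> - (L * D) / 2"
    proof -
      have "q * (kr - 1) \<ge> q * (x - 2)" using kr2 q0 by (intro mult_left_mono) auto
      also have "q * (x - 2) = 2 * L * (1 + D) - 2 * q" unfolding x_def using qK
        by (simp add: algebra_simps)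
      finally show ?thesis using q0 DL by (simp add: algebra_simps)
    qed
    have t4: "kr * L - q * (kr * (kr - 1) / 2) \<le> - (Kk * L * D) / 2"
    proof -
      have "kr * L - q * (kr * (kr - 1) / 2) = kr * (L - q * (kr - 1) / 2)" by (simp add: algebra_simps)
      also have "\<dots> \<le> kr * (- (L * D) / 2)" using t3 kr0 by (intro mult_left_mono) auto
      also have "\<dots> \<le> Kk * (- (L * D) / 2)" using krK Lpos D0
        by (intro mult_right_mono_neg) auto
      finally show ?thesis by simp
    qed
    have t5: "2 * q * Rr \<le> Kk * L * D / 4"
    proof -
      have "S \<le> D / 16"
      proof -
        have "S = sqrt S * sqrt S" using S0 by simp
        also have "\<dots> \<le> (1/16) * D" using sS1 sS2 S0 by (intro mult_mono) auto
        finally show ?thesis by simp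
      qed
      have "2 * q * Rr = 4 * L * Kk * S" unfolding Rr using qK by (simp add: power2_eq_square algebra_simps)
      also have "\<dots> \<le> 4 * L * Kk * (D / 16)" using \<open>S \<le> D/16\<close> Lpos Kpos by (intro mult_left_mono) auto
      finally show ?thesis by (simp add: algebra_simps)
    qed
    show ?thesis using t1 t2 t4 t5 by simp
  qed
  finally show ?thesis .
qed


theorem mainTheorem11:
  fixes p r :: "nat \<Rightarrow> real" and K :: "nat \<Rightarrow> real"
  assumes p_range: "\<forall>n. 0 < p n \<and> p n < 1"
    and p_lim: "p \<longlonglongrightarrow> 1"
    and K_def: "\<forall>n. K n = 2 * ln (real n) / (1 - p n)"
    and r_pos: "\<forall>n. r n > 0"
    and r_small: "r \<in> o(\<lambda>n. (K n)^2)"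
  shows "\<exists>\<delta> \<epsilon> :: nat \<Rightarrow> real.
           (\<forall>n. \<delta> n > 0) \<and> (\<forall>n. \<epsilon> n > 0) \<and>
           \<delta> \<longlonglongrightarrow> 0 \<and> \<epsilon> \<longlonglongrightarrow> 0 \<and>
           filterlim (\<lambda>n. \<delta> n * K n) at_top sequentially \<and>
           (\<forall>n R. R \<subseteq> all_edges n \<and> real (card R) \<le> r n \<longrightarrow>
              measure_pmf.expectation (gnp n (p n))
                (\<lambda>G. real (num_cliques n (graph_join G R) (nat \<lfloor>K n * (1 + \<delta> n)\<rfloor>)))
              \<le> \<epsilon> n)"
proof -
  define s where "s n = r n / (K n)^2" for n
  define \<delta> where "\<delta> n = sqrt (s n) + 1 / sqrt (ln (real n + 2))" for n
  define k where "k n = nat \<lfloor>K n * (1 + \<delta> n)\<rfloor>" for n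
  define B where "B n = real (n choose k n) * p n ^ (k n choose 2) / p n powr r n" for n
  define \<epsilon> where "\<epsilon> n = B n + 1 / (real n + 1)" for n
  have s0: "s n \<ge> 0" for n using r_pos unfolding s_def by (simp add: less_imp_le)
  have s_lim: "s \<longlonglongrightarrow> 0" unfolding s_def[abs_def] by (rule smalloD_tendsto[OF r_small])
  have sq_lim: "(\<lambda>n. sqrt (s n)) \<longlonglongrightarrow> 0" using tendsto_real_sqrt[OF s_lim] by simp
  have l1: "(\<lambda>n::nat. 1 / sqrt (ln (real n + 2))) \<longlonglongrightarrow> 0" by real_asymp
  have l2: "filterlim (\<lambda>n::nat. ln (real n) / sqrt (ln (real n + 2))) at_top sequentially" by real_asymp
  have lnpos: "ln (real n + 2) > 0" for n by simp
  have \<delta>pos: "\<delta> n > 0" for n unfolding \<delta>_def using s0[of n] lnpos[of n] by (simp add: add_nonneg_pos)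
  have \<delta>lim: "\<delta> \<longlonglongrightarrow> 0" unfolding \<delta>_def[abs_def] using tendsto_add[OF sq_lim l1] by simp
  have Kge: "K n \<ge> 2 * ln (real n)" if "n \<ge> 1" for n
  proof -
    have q: "0 < 1 - p n" "1 - p n \<le> 1" using p_range by (auto simp: less_imp_le)
    have L: "ln (real n) \<ge> 0" using that by simp
    have "2 * ln (real n) * (1 - p n) \<le> 2 * ln (real n)" using q L by (intro mult_left_le) auto
    thus ?thesis using K_def q by (simp add: le_divide_eq)
  qed
  have \<delta>L: "\<delta> n * ln (real n) \<ge> ln (real n) / sqrt (ln (real n + 2))" if "n \<ge> 1" for n
  proof -
    have "1 / sqrt (ln (real n + 2)) \<le> \<delta> n" unfolding \<delta>_def using s0[of n] by simp
    moreover have "ln (real n) \<ge> 0" using that by simp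
    ultimately have "1 / sqrt (ln (real n + 2)) * ln (real n) \<le> \<delta> n * ln (real n)"
      by (intro mult_right_mono)
    thus ?thesis by simp
  qed
  have \<delta>K: "\<delta> n * K n \<ge> 2 * (ln (real n) / sqrt (ln (real n + 2)))" if "n \<ge> 1" for n
  proof -
    have "\<delta> n * (2 * ln (real n)) \<le> \<delta> n * K n" using Kge[OF that] \<delta>pos[of n] by (intro mult_left_mono) auto
    thus ?thesis using \<delta>L[OF that] by (simp add: algebra_simps)
  qed
  have lim_\<delta>L: "filterlim (\<lambda>n. \<delta> n * ln (real n)) at_top sequentially"
    by (rule filterlim_at_top_mono[OF l2]) (use \<delta>L in \<open>auto intro: eventually_sequentiallyI[of 1]\<close>)
  have lim_\<delta>K: "filterlim (\<lambda>n. \<delta> n * K n) at_top sequentially"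
  proof (rule filterlim_at_top_mono)
    show "filterlim (\<lambda>n::nat. 2 * (ln (real n) / sqrt (ln (real n + 2)))) at_top sequentially"
      by real_asymp
  qed (use \<delta>K in \<open>auto intro: eventually_sequentiallyI[of 1]\<close>)
  have Bnn: "B n \<ge> 0" for n using p_range unfolding B_def by (auto simp: less_imp_le)
  have \<epsilon>pos: "\<epsilon> n > 0" for n unfolding \<epsilon>_def using Bnn[of n] by (simp add: add_nonneg_pos)
  have Ebound: "measure_pmf.expectation (gnp n (p n))
                (\<lambda>G. real (num_cliques n (graph_join G R) (nat \<lfloor>K n * (1 + \<delta> n)\<rfloor>))) \<le> \<epsilon> n"
    if R: "R \<subseteq> all_edges n" "real (card R) \<le> r n" for n R
  proof -
    have p: "0 < p n" "p n \<le> 1" using p_range by (auto simp: less_imp_le)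
    have "measure_pmf.expectation (gnp n (p n))
                (\<lambda>G. real (num_cliques n (graph_join G R) (k n)))
         \<le> real (n choose k n) * p n ^ (k n choose 2) / p n ^ card R"
      by (rule expect_bound[OF p R(1)])
    also have "\<dots> \<le> B n" unfolding B_def
    proof (intro divide_left_mono)
      have "p n powr r n \<le> p n powr real (card R)"
        using p R(2) p_range by (intro powr_mono') (auto simp: less_imp_le)
      thus "p n powr r n \<le> p n ^ card R" using p by (simp add: powr_realpow)
      show "0 \<le> real (n choose k n) * p n ^ (k n choose 2)" using p by simp
      show "0 < p n ^ card R * p n powr r n" using p by simp
    qed
    also have "\<dots> \<le> \<epsilon> n" unfolding \<epsilon>_def by simp
    finally show ?thesis by (simp add: k_def)
  qed
  have B_lim: "B \<longlonglongrightarrow> 0"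
  proof (rule tendsto_sandwich[of "\<lambda>_. 0" _ _ "\<lambda>n. exp (- (1/4 * (\<delta> n * K n)))"])
    show "\<forall>\<^sub>F n in sequentially. 0 \<le> B n" using Bnn by simp
    show "(\<lambda>_. 0::real) \<longlonglongrightarrow> 0" by simp
    have a: "filterlim (\<lambda>n. 1/4 * (\<delta> n * K n)) at_top sequentially"
      by (rule filterlim_tendsto_pos_mult_at_top[OF tendsto_const _ lim_\<delta>K]) simp
    have "filterlim (\<lambda>n. - (1/4 * (\<delta> n * K n))) at_bot sequentially"
      using a by (subst (asm) filterlim_uminus_at_top)
    then show "(\<lambda>n. exp (- (1/4 * (\<delta> n * K n)))) \<longlonglongrightarrow> 0"
      by (rule filterlim_compose[OF exp_at_bot])
    have ev1: "\<forall>\<^sub>F n in sequentially. n \<ge> 3" by (rule eventually_ge_at_top)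
    have ev2: "\<forall>\<^sub>F n in sequentially. 1/2 \<le> p n"
      using order_tendstoD(1)[OF p_lim, of "1/2"] by (auto elim: eventually_mono)
    have ev3: "\<forall>\<^sub>F n in sequentially. 2 \<le> \<delta> n * ln (real n)"
      using lim_\<delta>L by (simp add: filterlim_at_top)
    have ev4: "\<forall>\<^sub>F n in sequentially. 1 \<le> \<delta> n * K n"
      using lim_\<delta>K by (simp add: filterlim_at_top)
    have ev5: "\<forall>\<^sub>F n in sequentially. sqrt (s n) \<le> 1/16"
      using order_tendstoD(2)[OF sq_lim, of "1/16"] by (auto elim: eventually_mono)
    show "\<forall>\<^sub>F n in sequentially. B n \<le> exp (- (1/4 * (\<delta> n * K n)))"
      using ev1 ev2 ev3 ev4 ev5
    proof eventually_elim
      case (elim n)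
      have L1: "ln (real n) \<ge> 1"
      proof -
        have "exp 1 \<le> (3::real)" using exp_le by simp
        also have "\<dots> \<le> real n" using elim(1) by simp
        finally show ?thesis using elim(1) by (simp add: ln_ge_iff)
      qed
      have Kpos: "K n > 0" using Kge[of n] elim(1) L1 by simp
      have rr: "r n = s n * (K n)^2" unfolding s_def using Kpos by simp
      have "B n \<le> exp (- (K n * ln (real n) * \<delta> n) / 4)"
        unfolding B_def
      proof (rule key[OF elim(1) refl elim(2) _ _ rr s0 elim(5) _ elim(3) elim(4) k_def[of n]])
        show "p n < 1" using p_range by blast
        show "K n = 2 * ln (real n) / (1 - p n)" using K_def by blast
        show "sqrt (s n) \<le> \<delta> n" unfolding \<delta>_def using lnpos[of n] by simp
      qed
      also have "\<dots> \<le> exp (- (1/4 * (\<delta> n * K n)))"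
      proof -
        have "\<delta> n * K n * 1 \<le> \<delta> n * K n * ln (real n)"
          using L1 \<delta>pos[of n] Kpos by (intro mult_left_mono) auto
        hence "- (K n * ln (real n) * \<delta> n) / 4 \<le> - (1/4 * (\<delta> n * K n))"
          by (simp add: mult_ac)
        thus ?thesis by simp
      qed
      finally show ?case .
    qed
  qed
  have \<epsilon>lim: "\<epsilon> \<longlonglongrightarrow> 0"
  proof -
    have "(\<lambda>n::nat. 1 / (real n + 1)) \<longlonglongrightarrow> 0" by real_asymp
    from tendsto_add[OF B_lim this] show ?thesis unfolding \<epsilon>_def[abs_def] by simp
  qed
  show ?thesis
    using \<delta>pos \<epsilon>pos \<delta>lim \<epsilon>lim lim_\<delta>K Ebound by blast
qed

end
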